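(* A power series $\varphi(x)=\sum_{i\ge0}\gamma_ix^i\in\mathbb{K}[[x]]$ is an element of $\mathcal{F}_1$ if and only if $$\sum_{i=0}^m(-1)^i\binom{2m-1}{m-i}\binom{m+i}{i}\gamma_{m+i-1}=0$$ for each $m\ge1$.
   Context: $\mathbb{K}\in\{\mathbb{Q},\mathbb{R},\mathbb{C}\}$. $\mathcal{F}_1$ denotes the space of $\varphi\in\mathbb{K}[[x]]$ with $\varphi(x/(x-1))=(1-x)\varphi(x)$. *)

theory Defs
  imports "HOL-Computational_Algebra.Formal_Power_Series" Complex_Main
begin

text \<open>The power series x/(x-1) = x * (x - 1)^(-1) in K[[x]] (its constant term is 0,
  so substitution into it is well defined).\<close>
definition fps_x_over_x_minus_1 :: "'a::field fps" where
  "fps_x_over_x_minus_1 = fps_X * inverse (fps_X - 1)"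

definition F1 :: "'a::field fps set" where
  "F1 = {\<phi>. fps_compose \<phi> fps_x_over_x_minus_1 = (1 - fps_X) * \<phi>}"

definition coeff_cond :: "'a::field fps \<Rightarrow> bool" where
  "coeff_cond \<phi> \<longleftrightarrow> (\<forall>m::nat. m \<ge> 1 \<longrightarrow>
     (\<Sum>i=0..m. (-1)^i * of_nat ((2*m - 1) choose (m - i)) * of_nat ((m + i) choose i)
                 * fps_nth \<phi> (m + i - 1)) = 0)"

end

theory Submission
  imports Defs
begin

unbundle fps_syntax

abbreviation yy :: "'a::field fps" where "yy \<equiv> fps_x_over_x_minus_1"
definition gg :: "'a::field fps" where "gg = inverse (fps_X - 1)"

lemma gg_mult: "gg * (fps_X - 1) = (1::'a::field fps)"
  unfolding gg_def by (rule inverse_mult_eq_1) simp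

lemma yy_eq: "yy = fps_X * (gg::'a::field fps)"
  by (simp add: fps_x_over_x_minus_1_def gg_def)

lemma yy0: "(yy::'a::field fps) $ 0 = 0"
  by (simp add: yy_eq)

lemma yy_minus_1: "yy - 1 = (gg::'a::field fps)"
proof -
  have "yy - 1 = fps_X * gg - gg * (fps_X - 1)" by (simp add: yy_eq gg_mult)
  also have "\<dots> = gg" by (simp add: algebra_simps)
  finally show ?thesis .
qed

lemma gg_comp: "gg oo yy = (fps_X - 1 :: 'a::field fps)"
proof -
  have "(gg oo yy) * (yy - 1) = ((gg * (fps_X - 1)) oo (yy::'a fps))"
    by (simp add: fps_compose_mult_distrib[OF yy0] fps_compose_sub_distrib fps_X_fps_compose_startby0[OF yy0])
  hence "(gg oo yy) * gg = (1::'a fps)" by (simp add: gg_mult yy_minus_1)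
  hence "(gg oo yy) * gg * (fps_X - 1) = (fps_X - 1::'a fps)" by simp
  thus ?thesis by (simp add: mult.assoc gg_mult)
qed

lemma yy_comp: "yy oo yy = (fps_X :: 'a::field fps)"
proof -
  have "yy oo yy = (fps_X * gg) oo (yy::'a fps)" by (simp add: yy_eq)
  also have "\<dots> = (fps_X oo yy) * (gg oo (yy::'a fps))"
    by (rule fps_compose_mult_distrib[OF yy0])
  also have "\<dots> = yy * (fps_X - 1)" by (simp add: gg_comp fps_X_fps_compose_startby0[OF yy0])
  also have "\<dots> = fps_X * (gg * (fps_X - 1))" by (simp add: yy_eq mult.assoc)
  finally show ?thesis by (simp add: gg_mult)
qed

definition SS :: "'a::field fps \<Rightarrow> 'a fps" where
  "SS \<phi> = (\<phi> oo yy) * inverse (1 - fps_X)"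

lemma hh: "inverse (1 - fps_X) = - (gg::'a::field fps)"
  unfolding gg_def by (metis fps_inverse_minus minus_diff_eq)

lemma hh_comp: "inverse (1 - fps_X) oo yy = (1 - fps_X :: 'a::field fps)"
  by (simp add: hh fps_compose_uminus gg_comp)

lemma hh_mult: "(1 - fps_X) * inverse (1 - fps_X) = (1::'a::field fps)"
  by (rule inverse_mult_eq_1') simp

lemma SS_SS: "SS (SS \<phi>) = (\<phi>::'a::field fps)"
proof -
  have "SS (SS \<phi>) = ((\<phi> oo yy oo yy) * (inverse (1 - fps_X) oo yy)) * inverse (1 - fps_X)"
    by (simp add: SS_def fps_compose_mult_distrib[OF yy0])
  also have "\<phi> oo yy oo yy = \<phi>" by (simp add: fps_compose_assoc[OF yy0 yy0, symmetric] yy_comp)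
  finally show ?thesis by (simp add: hh_comp mult.assoc hh_mult)
qed

lemma SS_diff: "SS (a - b) = SS a - SS (b::'a::field fps)"
  by (simp add: SS_def fps_compose_sub_distrib algebra_simps)

lemma F1_iff_SS: "\<phi> \<in> F1 \<longleftrightarrow> SS \<phi> = (\<phi>::'a::field fps)"
proof
  assume "\<phi> \<in> F1"
  hence "\<phi> oo yy = (1 - fps_X) * \<phi>" by (simp add: F1_def)
  thus "SS \<phi> = \<phi>" unfolding SS_def using hh_mult
    by (metis mult.commute mult.left_commute mult.right_neutral)
next
  assume a: "SS \<phi> = \<phi>"
  have "\<phi> oo yy = (\<phi> oo yy) * ((1 - fps_X) * inverse (1 - fps_X))" by (simp add: hh_mult)
  also have "\<dots> = (1 - fps_X) * SS \<phi>" unfolding SS_def by (simp add: algebra_simps)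
  finally show "\<phi> \<in> F1" using a by (simp add: F1_def)
qed


lemma gg0: "(gg::'a::field fps) $ 0 = -1"
  by (simp add: gg_def)

lemma yy_pow: "yy ^ i = fps_X ^ i * (gg::'a::field fps) ^ i"
  by (simp add: yy_eq power_mult_distrib)

lemma yy_pow_nth: "(yy ^ i :: 'a::field fps) $ n = (if n < i then 0 else (gg ^ i) $ (n - i))"
  by (simp add: yy_pow fps_X_power_mult_nth)

lemma yy_pow_nth_diag: "(yy ^ n :: 'a::field fps) $ n = (-1) ^ n"
  by (simp add: yy_pow_nth fps_power_zeroth gg0)

lemma ones_eq: "inverse (1 - fps_X) = Abs_fps (\<lambda>n. 1::'a::field)"
  by (metis fps_inverse_gp' fps_inverse_idempotent fps_nth_Abs_fps one_neq_zero)

lemma compose_low: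
  assumes "\<forall>i<n. \<chi> $ i = 0"
  shows "k < n \<Longrightarrow> (\<chi> oo yy :: 'a::field fps) $ k = 0"
    and "(\<chi> oo yy :: 'a::field fps) $ n = (-1) ^ n * \<chi> $ n"
proof -
  show "k < n \<Longrightarrow> (\<chi> oo yy :: 'a::field fps) $ k = 0"
    using assms by (simp add: fps_compose_nth)
  have "(\<chi> oo yy :: 'a::field fps) $ n = (\<Sum>i=0..n. \<chi> $ i * (yy ^ i) $ n)"
    by (simp add: fps_compose_nth)
  also have "\<dots> = \<chi> $ n * (yy ^ n) $ n"
    by (rule trans[OF sum.mono_neutral_right[of "{0..n}" "{n}"]]) (use assms in auto)
  finally show "(\<chi> oo yy :: 'a::field fps) $ n = (-1) ^ n * \<chi> $ n"
    by (simp add: yy_pow_nth_diag)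
qed

lemma SS_low:
  assumes "\<forall>i<n. \<chi> $ i = 0"
  shows "(SS \<chi> :: 'a::field fps) $ n = (-1) ^ n * \<chi> $ n"
proof -
  have "(SS \<chi>) $ n = (\<Sum>i=0..n. (\<chi> oo yy) $ i * 1)"
    by (simp add: SS_def fps_mult_nth ones_eq)
  also have "\<dots> = (\<chi> oo yy) $ n"
    by (rule trans[OF sum.mono_neutral_right[of "{0..n}" "{n}"]]) (use compose_low(1)[OF assms] in auto)
  finally show ?thesis using compose_low(2)[OF assms] by simp
qed

lemma anti_odd:
  assumes "\<chi> \<noteq> 0" "SS \<chi> = - (\<chi>::'a::field_char_0 fps)"
  shows "odd (subdegree \<chi>)"
proof (rule ccontr)
  assume "\<not> odd (subdegree \<chi>)"
  hence ev: "(-1::'a) ^ subdegree \<chi> = 1" by (simp add: neg_one_even_power)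
  have z: "\<forall>i<subdegree \<chi>. \<chi> $ i = 0" using nth_less_subdegree_zero by blast
  have "(SS \<chi>) $ subdegree \<chi> = \<chi> $ subdegree \<chi>"
    using SS_low[OF z] ev by simp
  hence "- (\<chi> $ subdegree \<chi>) = \<chi> $ subdegree \<chi>" using assms(2) by simp
  hence "\<chi> $ subdegree \<chi> = 0" by (simp add: minus_equation_iff eq_neg_iff_add_eq_0)
  with assms(1) show False by simp
qed

lemma compose_mult_nth:
  "((\<phi> oo yy) * Q) $ N = (\<Sum>i=0..N. \<phi> $ i * (yy ^ i * Q) $ (N::nat) :: 'a::field)"
proof -
  have "((\<phi> oo yy) * Q) $ N = (\<Sum>n=0..N. (\<Sum>i=0..n. \<phi> $ i * (yy ^ i) $ n) * Q $ (N - n))"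
    by (simp add: fps_mult_nth fps_compose_nth)
  also have "\<dots> = (\<Sum>n=0..N. (\<Sum>i=0..N. \<phi> $ i * (yy ^ i) $ n) * Q $ (N - n))"
  proof (rule sum.cong[OF refl])
    fix n assume "n \<in> {0..N}"
    hence "(\<Sum>i=0..n. \<phi> $ i * (yy ^ i) $ n) = (\<Sum>i=0..N. \<phi> $ i * (yy ^ i :: 'a fps) $ n)"
      by (intro sum.mono_neutral_left) (auto simp: yy_pow_nth)
    thus "(\<Sum>i=0..n. \<phi> $ i * (yy ^ i) $ n) * Q $ (N - n) = (\<Sum>i=0..N. \<phi> $ i * (yy ^ i) $ n) * Q $ (N - n)"
      by simp
  qed
  also have "\<dots> = (\<Sum>i=0..N. \<phi> $ i * (\<Sum>n=0..N. (yy ^ i) $ n * Q $ (N - n)))"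
    unfolding sum_distrib_left sum_distrib_right
    by (subst sum.swap) (simp add: mult.assoc)
  finally show ?thesis by (simp add: fps_mult_nth)
qed

lemma mult_nth_sum:
  "(\<phi> * P) $ N = (\<Sum>i=0..N. \<phi> $ i * (fps_X ^ i * P) $ (N::nat) :: 'a::field)"
  by (simp only: fps_mult_nth[of \<phi>] fps_X_power_mult_nth) (rule sum.cong, auto)


lemma neg1_pow_eq:
  assumes "a + b = 2 * (c::nat)"
  shows "(-1::'a::ring_1) ^ a = (-1) ^ b"
proof (cases "even a")
  case True
  hence "even b" using assms by (metis dvd_add_right_iff dvd_triv_left)
  thus ?thesis using True by simp
next
  case False
  hence "odd b" using assms by (metis dvd_add_left_iff dvd_triv_left)
  thus ?thesis using False by simp
qed

lemma Xm1_pow_nth: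
  "((fps_X - 1) ^ a :: 'a::field fps) $ j = (-1) ^ (a + j) * of_nat (a choose j)"
proof (induction a arbitrary: j)
  case 0
  then show ?case by (cases j) auto
next
  case (Suc a)
  have e: "(fps_X - 1 :: 'a fps) ^ Suc a = fps_X * (fps_X - 1) ^ a - (fps_X - 1) ^ a" 
    by (simp only: power_Suc left_diff_distrib mult_1_left)
  show ?case
  proof (cases j)
    case 0
    then show ?thesis by (simp add: e Suc)
  next
    case (Suc j')
    then show ?thesis by (simp add: e Suc.IH fps_X_mult_nth algebra_simps)
  qed
qed

lemma gg_nth: "(gg :: 'a::field fps) $ j = -1"
proof -
  have "(gg :: 'a fps) $ j = (- inverse (1 - fps_X :: 'a fps)) $ j" by (simp add: hh)
  also have "\<dots> = -1" by (simp add: ones_eq)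
  finally show ?thesis .
qed

lemma gg_pow_nth:
  "(gg ^ Suc k :: 'a::field fps) $ j = (-1) ^ Suc k * of_nat ((k + j) choose j)"
proof (induction k arbitrary: j)
  case 0
  then show ?case by (simp add: gg_nth)
next
  case (Suc k)
  have "(gg ^ Suc (Suc k) :: 'a fps) $ j = (gg ^ Suc k * gg) $ j" by (simp only: power_Suc2)
  also have "\<dots> = (\<Sum>i=0..j. (-1) ^ Suc k * of_nat ((k + i) choose i) * (-1))"
    by (simp only: fps_mult_nth Suc.IH gg_nth)
  also have "\<dots> = (-1) ^ Suc (Suc k) * of_nat (\<Sum>i\<le>j. (k + i) choose i)"
    by (simp add: sum_distrib_left atLeast0AtMost)
  also have "(\<Sum>i\<le>j. (k + i) choose i) = Suc (k + j) choose j" by (rule sum_choose_lower)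
  finally show ?case by simp
qed


definition Pn :: "nat \<Rightarrow> 'a::field fps" where
  "Pn n = (fps_X - 1) ^ n * (fps_X - 2)"

lemma X2: "(fps_X - 2 :: 'a::field fps) = (fps_X - 1) - 1"
  by (simp only: diff_diff_eq one_add_one)

lemma Pn_alt: "(Pn n :: 'a::field fps) = (fps_X - 1) ^ Suc n - (fps_X - 1) ^ n"
proof -
  show ?thesis unfolding Pn_def X2 by (simp only: right_diff_distrib power_Suc2 mult_1_right)
qed

lemma Pn_nth: "(Pn n :: 'a::field fps) $ j =
   (-1) ^ (Suc n + j) * of_nat (Suc n choose j) - (-1) ^ (n + j) * of_nat (n choose j)"
  by (simp only: Pn_alt fps_sub_nth Xm1_pow_nth)

lemma r1: "(x::'b::comm_ring_1) ^ i * y ^ i * (p * q * (- y)) = x ^ i * - (y ^ Suc i * p * q)"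
  by (simp add: power_Suc2 mult_ac)
lemma r2: "(y::'b::comm_ring_1) ^ Suc i * z ^ (Suc i + d) * q = (y ^ Suc i * z ^ Suc i) * z ^ d * q"
  by (simp add: power_add mult_ac)
lemma r3: "(y::'b::comm_ring_1) ^ Suc (n + k) * z ^ n * q = y ^ Suc k * (y ^ n * z ^ n) * q"
  by (simp add: power_add mult_ac)

lemma gg_Xm1_pow: "(gg::'a::field fps) ^ k * (fps_X - 1) ^ k = 1"
  by (simp add: power_mult_distrib[symmetric] gg_mult)

lemma key_mono:
  assumes "i \<le> 2*n+1"
  shows "(fps_X ^ i * Pn n) $ (2*n+1) + (yy ^ i * (Pn n * inverse (1 - fps_X))) $ (2*n+1) = (0::'a::field)"
proof -
  define j where "j = 2*n+1-i"
  have A: "(fps_X ^ i * Pn n :: 'a fps) $ (2*n+1) = Pn n $ j"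
    using assms by (simp add: fps_X_power_mult_nth j_def)
  define G :: "'a fps" where "G = gg ^ Suc i * (fps_X - 1) ^ n * (fps_X - 2)"
  have "yy ^ i * (Pn n * inverse (1 - fps_X)) = fps_X ^ i * (- G)"
    unfolding yy_pow hh G_def Pn_def by (rule r1)
  hence B: "(yy ^ i * (Pn n * inverse (1 - fps_X))) $ (2*n+1) = - G $ j"
    using assms by (simp only: fps_X_power_mult_nth j_def fps_neg_nth not_less [symmetric] if_False)
  have "Pn n $ j = G $ j"
  proof (cases "i < n")
    case True
    define d where "d = n - Suc i"
    have d: "n = Suc i + d" using True by (simp add: d_def)
    have "G = (gg ^ Suc i * (fps_X - 1) ^ Suc i) * (fps_X - 1) ^ d * (fps_X - 2)"
      unfolding G_def d by (rule r2)
    hence "G = Pn d" by (simp only: gg_Xm1_pow Pn_def mult_1_left)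
    moreover have "j > Suc n" "Suc n > Suc d" using True d by (auto simp: j_def)
    ultimately show ?thesis by (simp add: Pn_nth binomial_eq_0)
  next
    case False
    define k0 where "k0 = i - n"
    have k0: "i = n + k0" using False by (simp add: k0_def)
    have "G = (gg ^ Suc k0 * (fps_X - 1)) - gg ^ Suc k0"
    proof -
      have "G = gg ^ Suc k0 * (gg ^ n * (fps_X - 1) ^ n) * (fps_X - 2)"
        unfolding G_def k0 by (rule r3)
      hence "G = gg ^ Suc k0 * ((fps_X - 1) - 1)"
        by (simp only: gg_Xm1_pow mult_1_right X2)
      thus ?thesis by (simp only: right_diff_distrib mult_1_right)
    qed
    also have "gg ^ Suc k0 * (fps_X - 1) = (gg ^ k0 :: 'a fps)"
      by (simp add: power_Suc2 mult.assoc gg_mult)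
    finally have G: "G = gg ^ k0 - gg ^ Suc k0" .
    have jk: "j + k0 = Suc n" using assms k0 by (simp add: j_def)
    show ?thesis
    proof (cases k0)
      case 0
      hence "j = Suc n" using jk by simp
      have e1: "(-1::'a) ^ (Suc n + Suc n) = 1"
        by (simp add: mult_2[symmetric])
      have e2: "n choose Suc n = 0" by (simp add: binomial_eq_0)
      have "Pn n $ j = (1::'a)" unfolding Pn_nth \<open>j = Suc n\<close> e1 e2 by simp
      moreover have "G $ j = (1::'a)" unfolding G 0 \<open>j = Suc n\<close> fps_sub_nth
        by (simp only: power_0 gg_pow_nth) simp
      ultimately show ?thesis by simp
    next
      case (Suc k1)
      have s1: "(-1::'a) ^ (Suc n + j) = (-1) ^ k0"
        by (rule neg1_pow_eq[where c="Suc n"]) (use jk in simp)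
      have s2: "(-1::'a) ^ (n + j) = (-1) ^ k1"
        by (rule neg1_pow_eq[where c="n"]) (use jk Suc in simp)
      have c1: "k1 + j = n" "k0 + j = Suc n" using jk Suc by auto
      show ?thesis
        unfolding G fps_sub_nth Pn_nth s1 s2 Suc gg_pow_nth
        using c1 Suc by (simp add: add.commute)
    qed
  qed
  thus ?thesis using A B by simp
qed

lemma binom_id:
  assumes "j \<le> Suc n"
  shows "(2*n+1 choose j) * ((2*n+2-j) choose (Suc n - j))
       = (2*n+1 choose Suc n) * ((Suc n choose j) + (n choose j))"
proof (cases "j \<le> n")
  case True
  have t1: "(2*n+1 choose Suc n) * (Suc n choose j) = (2*n+1 choose j) * ((2*n+1-j) choose (Suc n - j))"
    using assms by (intro choose_mult) auto
  have sym: "(2*n+1 choose Suc n) = (2*n+1 choose n)"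
    using binomial_symmetric[of n "2*n+1"] by simp
  have t2: "(2*n+1 choose n) * (n choose j) = (2*n+1 choose j) * ((2*n+1-j) choose (n - j))"
    using True by (intro choose_mult) auto
  have p: "(2*n+2-j) choose (Suc n - j) = ((2*n+1-j) choose (n - j)) + ((2*n+1-j) choose (Suc n - j))"
  proof -
    have "2*n+2-j = Suc (2*n+1-j)" "Suc n - j = Suc (n - j)" using True by auto
    thus ?thesis by simp
  qed
  show ?thesis using t1 t2 sym p by (metis add.commute add_mult_distrib2)
next
  case False
  hence j: "j = Suc n" using assms by simp
  show ?thesis by (simp add: j binomial_eq_0)
qed

lemma Pn_nth_refl:
  assumes "i \<le> Suc n"
  shows "(Pn n :: 'a::field fps) $ (Suc n - i) =
     (-1) ^ i * (of_nat (Suc n choose (Suc n - i)) + of_nat (n choose (Suc n - i)))"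
proof -
  have s1: "(-1::'a) ^ (Suc n + (Suc n - i)) = (-1) ^ i"
    by (rule neg1_pow_eq[where c="Suc n"]) (use assms in simp)
  have s2: "(-1::'a) ^ (n + (Suc n - i)) = (-1) ^ Suc i"
    by (rule neg1_pow_eq[where c="Suc n"]) (use assms in simp)
  show ?thesis unfolding Pn_nth s1 s2 by (simp add: algebra_simps)
qed

lemma Lsum_eq:
  "(\<Sum>i=0..Suc n. (-1)^i * of_nat ((2 * Suc n - 1) choose (Suc n - i)) * of_nat ((Suc n + i) choose i)
      * \<phi> $ (Suc n + i - 1)) = of_nat (2*n+1 choose Suc n) * (\<phi> * Pn n) $ (2*n+1 :: nat) * (1::'a::field)"
proof -
  have "(\<phi> * Pn n) $ (2*n+1) = (\<Sum>k=0..2*n+1. \<phi> $ k * Pn n $ (2*n+1-k))"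
    by (simp add: fps_mult_nth)
  also have "\<dots> = (\<Sum>k=n..2*n+1. \<phi> $ k * Pn n $ (2*n+1-k))"
  proof (rule sum.mono_neutral_right)
    show "\<forall>k\<in>{0..2*n+1} - {n..2*n+1}. \<phi> $ k * Pn n $ (2*n+1-k) = 0"
    proof
      fix k assume "k \<in> {0..2*n+1} - {n..2*n+1}"
      hence k: "k < n" by auto
      have "Suc n < 2*n+1-k" "n < 2*n+1-k" using k by auto
      thus "\<phi> $ k * Pn n $ (2*n+1-k) = 0" by (simp add: Pn_nth binomial_eq_0)
    qed
  qed auto
  also have "\<dots> = (\<Sum>i=0..Suc n. \<phi> $ (i+n) * Pn n $ (2*n+1-(i+n)))"
    using sum.shift_bounds_cl_nat_ivl[of "\<lambda>k. \<phi> $ k * Pn n $ (2*n+1-k)" 0 n "Suc n"]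
    by (simp add: mult_2)
  finally have e: "(\<phi> * Pn n) $ (2*n+1) = (\<Sum>i=0..Suc n. \<phi> $ (i+n) * Pn n $ (2*n+1-(i+n)))" .
  show ?thesis unfolding e sum_distrib_left mult_1_right
  proof (rule sum.cong[OF refl])
    fix i assume "i \<in> {0..Suc n}"
    hence i: "i \<le> Suc n" by simp
    have a1: "2 * Suc n - 1 = 2*n+1" "Suc n + i - 1 = i + n" "2*n+1-(i+n) = Suc n - i" using i by auto
    have b: "(2*n+1 choose (Suc n - i)) * ((Suc n + i) choose i)
       = (2*n+1 choose Suc n) * ((Suc n choose (Suc n - i)) + (n choose (Suc n - i)))"
    proof -
      have "2*n+2-(Suc n - i) = Suc n + i" "Suc n - (Suc n - i) = i" using i by auto
      thus ?thesis using binom_id[of "Suc n - i" n] by simp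
    qed
    have b': "(of_nat (2*n+1 choose (Suc n - i)) :: 'a) * of_nat ((Suc n + i) choose i)
       = of_nat (2*n+1 choose Suc n) * (of_nat (Suc n choose (Suc n - i)) + of_nat (n choose (Suc n - i)))"
      using arg_cong[OF b, of "of_nat :: nat \<Rightarrow> 'a"] by (simp only: of_nat_mult of_nat_add)
    show "(-1)^i * of_nat ((2 * Suc n - 1) choose (Suc n - i)) * of_nat ((Suc n + i) choose i) * \<phi> $ (Suc n + i - 1)
        = of_nat (2*n+1 choose Suc n) * (\<phi> $ (i+n) * Pn n $ (2*n+1-(i+n)))"
      unfolding a1 Pn_nth_refl[OF i]
    proof -
      let ?A = "(of_nat (2*n+1 choose (Suc n - i)) :: 'a)"
      let ?B = "(of_nat ((Suc n + i) choose i) :: 'a)"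
      let ?K = "(of_nat (2*n+1 choose Suc n) :: 'a)"
      let ?C = "(of_nat (Suc n choose (Suc n - i)) + of_nat (n choose (Suc n - i)) :: 'a)"
      have "(-1)^i * ?A * ?B * \<phi> $ (i + n) = ((?A * ?B) * (-1)^i) * \<phi> $ (i + n)"
        by (simp only: mult_ac)
      also have "\<dots> = ((?K * ?C) * (-1)^i) * \<phi> $ (i + n)" by (simp only: b')
      also have "\<dots> = ?K * (\<phi> $ (i + n) * ((-1)^i * ?C))" by (simp only: mult_ac)
      finally show "(-1)^i * ?A * ?B * \<phi> $ (i + n) = ?K * (\<phi> $ (i + n) * ((-1)^i * ?C))" .
    qed
  qed
qed


definition Lam :: "nat \<Rightarrow> 'a::field fps \<Rightarrow> 'a" where
  "Lam n \<phi> = (\<phi> * Pn n) $ (2*n+1)"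

lemma Lam_diff: "Lam n (a - b) = Lam n a - Lam n (b::'a::field fps)"
  unfolding Lam_def by (simp only: left_diff_distrib fps_sub_nth)

lemma Lam_SS: "Lam n (SS \<phi>) = - Lam n (\<phi>::'a::field fps)"
proof -
  have "Lam n (SS \<phi>) = ((\<phi> oo yy) * (Pn n * inverse (1 - fps_X))) $ (2*n+1)"
    unfolding Lam_def SS_def by (simp only: mult.assoc mult.commute[of "inverse (1 - fps_X)"])
  also have "\<dots> = (\<Sum>i=0..2*n+1. \<phi> $ i * (yy ^ i * (Pn n * inverse (1 - fps_X))) $ (2*n+1))"
    by (rule compose_mult_nth)
  also have "\<dots> = (\<Sum>i=0..2*n+1. - (\<phi> $ i * (fps_X ^ i * Pn n) $ (2*n+1)))"
  proof (rule sum.cong[OF refl])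
    fix i assume "i \<in> {0..2*n+1}"
    hence "i \<le> 2*n+1" by simp
    from key_mono[OF this] have "(yy ^ i * (Pn n * inverse (1 - fps_X))) $ (2*n+1)
        = - ((fps_X ^ i * Pn n) $ (2*n+1) :: 'a)"
      by (simp only: add_eq_0_iff)
    thus "\<phi> $ i * (yy ^ i * (Pn n * inverse (1 - fps_X))) $ (2*n+1)
        = - (\<phi> $ i * (fps_X ^ i * Pn n) $ (2*n+1))"
      by simp
  qed
  also have "\<dots> = - Lam n \<phi>"
    by (simp only: Lam_def mult_nth_sum[of \<phi>] sum_negf)
  finally show ?thesis .
qed

lemma coeff_cond_Lam: "coeff_cond \<phi> \<longleftrightarrow> (\<forall>n. Lam n (\<phi>::'a::field_char_0 fps) = 0)"
proof -
  have K: "(of_nat (2*n+1 choose Suc n) :: 'a) \<noteq> 0" for n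
    by (simp only: of_nat_eq_0_iff binomial_eq_0_iff)
  have "coeff_cond \<phi> \<longleftrightarrow> (\<forall>n. (\<Sum>i=0..Suc n. (-1)^i * of_nat ((2 * Suc n - 1) choose (Suc n - i)) * of_nat ((Suc n + i) choose i)
      * \<phi> $ (Suc n + i - 1)) = 0)"
    unfolding coeff_cond_def
  proof (intro iffI allI impI)
    fix n assume "\<forall>m\<ge>1. (\<Sum>i = 0..m. (- 1) ^ i * of_nat (2 * m - 1 choose (m - i)) * of_nat (m + i choose i) * \<phi> $ (m + i - 1)) = 0"
    thus "(\<Sum>i=0..Suc n. (-1)^i * of_nat ((2 * Suc n - 1) choose (Suc n - i)) * of_nat ((Suc n + i) choose i)
      * \<phi> $ (Suc n + i - 1)) = 0" by auto
  next
    fix m :: nat assume a: "\<forall>n. (\<Sum>i=0..Suc n. (-1)^i * of_nat ((2 * Suc n - 1) choose (Suc n - i)) * of_nat ((Suc n + i) choose i)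
      * \<phi> $ (Suc n + i - 1)) = 0" and m: "1 \<le> m"
    then obtain n where "m = Suc n" by (metis Suc_le_D One_nat_def)
    thus "(\<Sum>i = 0..m. (- 1) ^ i * of_nat (2 * m - 1 choose (m - i)) * of_nat (m + i choose i) * \<phi> $ (m + i - 1)) = 0"
      using a by blast
  qed
  also have "\<dots> \<longleftrightarrow> (\<forall>n. Lam n \<phi> = 0)"
    unfolding Lsum_eq Lam_def using K by simp
  finally show ?thesis .
qed

lemma F1_Lam: "\<phi> \<in> F1 \<Longrightarrow> Lam n (\<phi>::'a::field_char_0 fps) = 0"
proof -
  assume "\<phi> \<in> F1"
  hence "SS \<phi> = \<phi>" by (simp add: F1_iff_SS)
  hence "Lam n \<phi> = - Lam n \<phi>" using Lam_SS[of n \<phi>] by simp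
  thus ?thesis by (simp add: eq_neg_iff_add_eq_0)
qed

lemma Pn0: "(Pn n :: 'a::field_char_0 fps) $ 0 \<noteq> 0"
proof -
  have "(Pn n :: 'a fps) $ 0 = (-1) ^ Suc n - (-1) ^ n"
    by (simp only: Pn_nth add_0_right binomial_n_0 of_nat_1 mult_1_right)
  also have "\<dots> = - (2 * (-1) ^ n)"
    by (simp only: power_Suc mult_minus1 mult_2 minus_add_distrib diff_conv_add_uminus)
  finally have e: "(Pn n :: 'a fps) $ 0 = - (2 * (-1) ^ n)" .
  have "(2::'a) * (-1) ^ n \<noteq> 0" by simp
  thus ?thesis unfolding e by simp
qed

lemma Lam_order:
  assumes "subdegree \<chi> = 2*n+1" "\<chi> \<noteq> 0"
  shows "Lam n (\<chi>::'a::field_char_0 fps) \<noteq> 0"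
proof -
  have "Lam n \<chi> = (\<Sum>k=0..2*n+1. \<chi> $ k * Pn n $ (2*n+1-k))"
    unfolding Lam_def by (rule fps_mult_nth)
  also have "\<dots> = (\<Sum>k\<in>{2*n+1}. \<chi> $ k * Pn n $ (2*n+1-k))"
  proof (rule sum.mono_neutral_right)
    show "\<forall>k\<in>{0..2*n+1} - {2*n+1}. \<chi> $ k * Pn n $ (2*n+1-k) = 0"
    proof
      fix k assume "k \<in> {0..2*n+1} - {2*n+1}"
      hence "k < subdegree \<chi>" using assms(1) by auto
      hence "\<chi> $ k = 0" by (rule nth_less_subdegree_zero)
      thus "\<chi> $ k * Pn n $ (2*n+1-k) = 0" by (simp only: mult_zero_left)
    qed
  qed auto
  also have "\<dots> = \<chi> $ (2*n+1) * Pn n $ 0" by simp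
  finally have e: "Lam n \<chi> = \<chi> $ (2*n+1) * Pn n $ 0" .
  have "\<chi> $ (2*n+1) \<noteq> 0" using nth_subdegree_nonzero[OF assms(2)] unfolding assms(1) .
  thus ?thesis unfolding e using Pn0[of n] by (simp only: mult_eq_0_iff de_Morgan_disj) simp
qed

lemma main: "\<phi> \<in> F1 \<longleftrightarrow> coeff_cond (\<phi>::'a::field_char_0 fps)"
proof
  assume "\<phi> \<in> F1"
  thus "coeff_cond \<phi>" using F1_Lam coeff_cond_Lam by blast
next
  assume c: "coeff_cond \<phi>"
  show "\<phi> \<in> F1"
  proof (rule ccontr)
    assume "\<phi> \<notin> F1"
    hence ne: "SS \<phi> \<noteq> \<phi>" by (simp add: F1_iff_SS)
    define \<chi> where "\<chi> = SS \<phi> - \<phi>"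
    have nz: "\<chi> \<noteq> 0" using ne by (simp add: \<chi>_def)
    have "SS \<chi> = - \<chi>" by (simp add: \<chi>_def SS_diff SS_SS)
    from anti_odd[OF nz this] obtain n where n: "subdegree \<chi> = 2*n+1"
      by (metis oddE)
    have "Lam n \<chi> = - Lam n \<phi> - Lam n \<phi>" by (simp add: \<chi>_def Lam_diff Lam_SS)
    also have "\<dots> = 0" using c coeff_cond_Lam[of \<phi>] by simp
    finally show False using Lam_order[OF n nz] by simp
  qed
qed


theorem lemma4p4:
  shows "(\<forall>\<phi> :: rat fps. \<phi> \<in> F1 \<longleftrightarrow> coeff_cond \<phi>)
       \<and> (\<forall>\<phi> :: real fps. \<phi> \<in> F1 \<longleftrightarrow> coeff_cond \<phi>)
       \<and> (\<forall>\<phi> :: complex fps. \<phi> \<in> F1 \<longleftrightarrow> coeff_cond \<phi>)"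
  by (intro conjI allI main)

end
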